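(* Let $G$ be a finite bipartite graph. Then there exist $n,k\in\mathbb{N}$ with $k\le n$ such that for every 2-coloring of the edges of $B_{n,k}$, there exists an induced monochromatic copy of $G$ in $B_{n,k}$; that is, there is a set $V'$ of vertices of $B_{n,k}$ such that the induced subgraph of $B_{n,k}$ on $V'$ is isomorphic to $G$ and all of its edges receive the same color.
   Context: For $n\in\mathbb{N}$, $[n]=\{1,\dots,n\}$, and for a set $X$, $\binom{X}{k}$ denotes the set of $k$-element subsets of $X$. For $k\le n$, $B_{n,k}$ is the bipartite graph with left vertex set $[n]$, right vertex set $\binom{[n]}{k}$, and edge set $\{(x,X)\in[n]\times\binom{[n]}{k} : x\in X\}$. A bipartite graph is a graph whose vertex set is partitioned into sets $A,B$ with all edges between $A$ and $B$. For a graph $H=(V,E)$ and $V'\subseteq V$, the induced subgraph on $V'$ has vertex set $V'$ and edge set consisting of all edges of $H$ with both endpoints in $V'$. A 2-coloring of the edges is a map from the edge set to a 2-element set of colors. *)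

theory Defs
  imports Main
begin

definition bipartite_graph :: "'a set \<Rightarrow> 'a set set \<Rightarrow> bool" where
  "bipartite_graph V E \<longleftrightarrow>
     (\<exists>A B. A \<union> B = V \<and> A \<inter> B = {} \<and> (\<forall>e\<in>E. \<exists>a\<in>A. \<exists>b\<in>B. e = {a, b}))"

text \<open>The graph B_{n,k}: left vertices Inl x for x in [n], right vertices Inr X for k-subsets X of [n].\<close>

definition B_verts :: "nat \<Rightarrow> nat \<Rightarrow> (nat + nat set) set" where
  "B_verts n k = Inl ` {1..n} \<union> Inr ` {X. X \<subseteq> {1..n} \<and> card X = k}"

definition B_edges :: "nat \<Rightarrow> nat \<Rightarrow> (nat + nat set) set set" where
  "B_edges n k = {{Inl x, Inr X} | x X. x \<in> {1..n} \<and> X \<subseteq> {1..n} \<and> card X = k \<and> x \<in> X}"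

end

theory Submission
  imports Defs "HOL-Library.Ramsey"
begin

lemma sorted_img:
  fixes p :: "nat \<Rightarrow> nat"
  assumes "\<And>i j. i < j \<Longrightarrow> j < k \<Longrightarrow> p i < p j"
  shows "sorted_list_of_set (p ` {..<k}) = map p [0..<k]"
proof -
  have s: "sorted_wrt (<) (map p [0..<k])"
    by (auto simp: sorted_wrt_map sorted_wrt_iff_nth_less intro!: assms)
  have "sorted_list_of_set (set (map p [0..<k])) = map p [0..<k]"
    using s strict_sorted_iff sorted_list_of_set.idem_if_sorted_distinct by blast
  moreover have "set (map p [0..<k]) = p ` {..<k}" by auto
  ultimately show ?thesis by simp
qed

lemma block_eq:
  fixes M r r' s s' :: nat
  assumes "s < M" "s' < M" "r * M + s = r' * M + s'"
  shows "r = r' \<and> s = s'"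
proof -
  have a: "(r * M + s) div M = r" using assms(1) by simp
  have b: "(r' * M + s') div M = r'" using assms(2) by simp
  have "r = r'" using a b assms(3) by simp
  then show ?thesis using assms(3) by simp
qed

lemma block_less:
  fixes M r r' s s' :: nat
  assumes "s < M" "r < r'"
  shows "r * M + s < r' * M + s'"
proof -
  have "r * M + s < (r + 1) * M" using assms by simp
  also have "\<dots> \<le> r' * M" using assms by (intro mult_right_mono) auto
  finally show ?thesis by simp
qed

lemma B_edge_iff:
  "{Inl x, Inr X} \<in> B_edges n k \<longleftrightarrow> x \<in> {1..n} \<and> X \<subseteq> {1..n} \<and> card X = k \<and> x \<in> X"
  unfolding B_edges_def by (auto simp: doubleton_eq_iff)


lemma B_edgeE:
  assumes "e \<in> B_edges n k"
  obtains x X where "e = {Inl x, Inr X}" "x \<in> {1..n}" "X \<subseteq> {1..n}" "card X = k" "x \<in> X"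
  using assms unfolding B_edges_def by blast

lemma no_LL: "{Inl a, Inl b} \<notin> B_edges n k"
  by (auto elim!: B_edgeE simp: doubleton_eq_iff)

lemma no_RR: "{Inr a, Inr b} \<notin> B_edges n k"
  by (auto elim!: B_edgeE simp: doubleton_eq_iff)

theorem mainTheorem1:
  fixes V :: "'a set" and E :: "'a set set"
  assumes "finite V" and "bipartite_graph V E"
  shows "\<exists>n k. k \<le> n \<and>
    (\<forall>c :: (nat + nat set) set \<Rightarrow> bool.
      \<exists>V'. V' \<subseteq> B_verts n k \<and>
        (\<exists>f. bij_betw f V V' \<and>
             (\<forall>u\<in>V. \<forall>v\<in>V. {u, v} \<in> E \<longleftrightarrow> {f u, f v} \<in> B_edges n k)) \<and>
        (\<exists>col. \<forall>e\<in>B_edges n k. e \<subseteq> V' \<longrightarrow> c e = col))"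
proof -
  obtain A B where AB: "A \<union> B = V" "A \<inter> B = {}"
    and eAB: "\<forall>e\<in>E. \<exists>a\<in>A. \<exists>b\<in>B. e = {a, b}"
    using assms(2) unfolding bipartite_graph_def by blast
  have finA: "finite A" and finB: "finite B" using AB assms(1) by auto
  define cV where "cV = card V"
  have cA: "card A \<le> cV" and cB: "card B \<le> cV"
    unfolding cV_def using AB assms(1) by (auto intro: card_mono)
  define k where "k = 2 * cV + 1"
  define M where "M = cV + 1"
  define m where "m = k * M"
  have Mpos: "M > 0" by (simp add: M_def)
  have km: "k \<le> m" using Mpos by (simp add: m_def)
  obtain enc where enc: "bij_betw enc (Pow {..<k}) {0..<card (Pow {..<k})}"
    using ex_bij_betw_finite_nat[of "Pow {..<k}"] by auto
  have cardPow: "card (Pow {..<k}) = 2^k" by (simp add: card_Pow)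
  obtain N0 :: nat where N0: "partn_lst {..<N0} (replicate (2^k) m) k"
    using ramsey_full[of "replicate (2^k) m" k] by (elim exE) (rule that)
  define N where "N = max N0 m"
  have N: "partn_lst {..<N} (replicate (2^k) m) k"
    using partn_lst_greater_resource[OF N0] by (simp add: N_def)
  have kN: "k \<le> N" using km by (simp add: N_def)
  show ?thesis
  proof (rule exI[of _ N], rule exI[of _ k], intro conjI allI)
    show "k \<le> N" by (rule kN)
    fix c :: "(nat + nat set) set \<Rightarrow> bool"
    define pat where "pat X = {r. r < k \<and> c {Inl (Suc (sorted_list_of_set X ! r)), Inr (Suc ` X)}}"
      for X :: "nat set"
    have patK: "pat X \<in> Pow {..<k}" for X by (auto simp: pat_def)
    define F where "F X = enc (pat X)" for X
    have Fin: "F \<in> nsets {..<N} k \<rightarrow> {..<2^k}"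
      using enc cardPow patK by (auto simp: F_def bij_betw_def)
    obtain i H where "i < length (replicate (2^k) m)" and H0: "H \<in> nsets {..<N} (replicate (2^k) m ! i)"
      and Hi: "F ` nsets H k \<subseteq> {i}"
      using partn_lstE[OF N Fin] by auto
    then have H: "H \<in> nsets {..<N} m" by simp
    have finH: "finite H" "card H = m" "H \<subseteq> {..<N}" using H by (auto simp: nsets_def)
    define h where "h j = sorted_list_of_set H ! j" for j
    have hmono: "\<And>i j. i < j \<Longrightarrow> j < m \<Longrightarrow> h i < h j"
      using sorted_wrt_nth_less[OF strict_sorted_list_of_set, of _ _ H] finH(2) by (simp add: h_def)
    have hH: "\<And>j. j < m \<Longrightarrow> h j \<in> H"
      using finH unfolding h_def by (metis length_sorted_list_of_set nth_mem set_sorted_list_of_set)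
    have hinj: "\<And>i j. i < m \<Longrightarrow> j < m \<Longrightarrow> h i = h j \<Longrightarrow> i = j"
      by (metis hmono less_irrefl linorder_neqE_nat)
    have patconst: "\<And>X Y. X \<in> nsets H k \<Longrightarrow> Y \<in> nsets H k \<Longrightarrow> pat X = pat Y"
    proof -
      fix X Y assume "X \<in> nsets H k" "Y \<in> nsets H k"
      then have "enc (pat X) = enc (pat Y)" using Hi by (auto simp: F_def)
      then show "pat X = pat Y" using enc patK unfolding bij_betw_def inj_on_def by blast
    qed
    define X0 where "X0 = h ` {..<k}"
    have X0: "X0 \<in> nsets H k"
    proof -
      have "inj_on h {..<k}" using hinj km by (auto simp: inj_on_def)
      then show ?thesis using hH km by (auto simp: nsets_def X0_def card_image)
    qed
    define P where "P = pat X0"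
    have PK: "P \<subseteq> {..<k}" using patK by (simp add: P_def)
    define col where "col = (card P \<ge> cV)"
    define Q where "Q = (if col then P else {..<k} - P)"
    have cardQ: "card Q \<ge> cV"
    proof (cases col)
      case True then show ?thesis by (simp add: Q_def col_def)
    next
      case False
      then have "card P < cV" by (simp add: col_def)
      moreover have "card ({..<k} - P) = k - card P" using PK by (simp add: card_Diff_subset finite_subset)
      ultimately show ?thesis using False by (simp add: Q_def k_def)
    qed
    have finQ: "finite Q" using PK by (auto simp: Q_def intro: finite_subset)
    have QK: "Q \<subseteq> {..<k}" using PK by (auto simp: Q_def)
    have Qcol: "\<And>r. r \<in> Q \<Longrightarrow> (r \<in> P) = col" by (auto simp: Q_def split: if_splits)
    obtain \<phi> where \<phi>: "\<phi> ` A \<subseteq> Q" "inj_on \<phi> A"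
      using card_le_inj[of A Q] finA finQ cA cardQ by auto
    obtain \<psi> where \<psi>: "\<psi> ` B \<subseteq> {..<cV}" "inj_on \<psi> B"
      using card_le_inj[of B "{..<cV}"] finB cB by auto
    define Nb where "Nb y = {u\<in>A. {u,y}\<in>E}" for y
    define off where "off y r = (if r \<in> \<phi> ` Nb y then 0 else Suc (\<psi> y))" for y r
    define g where "g y r = r * M + off y r" for y r
    have offM: "\<And>y r. y \<in> B \<Longrightarrow> off y r < M"
      using \<psi> by (auto simp: off_def M_def)
    have gmono: "\<And>y i j. y \<in> B \<Longrightarrow> i < j \<Longrightarrow> g y i < g y j"
      unfolding g_def using offM block_less by blast
    have gm: "\<And>y r. y \<in> B \<Longrightarrow> r < k \<Longrightarrow> g y r < m"
    proof -
      fix y r assume "y \<in> B" "r < k"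
      have "g y r < (r + 1) * M" using offM[OF \<open>y \<in> B\<close>, of r] by (simp add: g_def)
      also have "\<dots> \<le> k * M" using \<open>r < k\<close> by (intro mult_right_mono) auto
      finally show "g y r < m" by (simp add: m_def)
    qed
    have hg: "\<And>y i j. y \<in> B \<Longrightarrow> i < j \<Longrightarrow> j < k \<Longrightarrow> h (g y i) < h (g y j)"
      using hmono gmono gm by blast
    define Xs where "Xs y = (\<lambda>r. h (g y r)) ` {..<k}" for y
    have Xs_sorted: "\<And>y. y \<in> B \<Longrightarrow> sorted_list_of_set (Xs y) = map (\<lambda>r. h (g y r)) [0..<k]"
      unfolding Xs_def by (rule sorted_img) (rule hg)
    have Xs_card: "\<And>y. y \<in> B \<Longrightarrow> card (Xs y) = k"
      by (metis Xs_sorted length_sorted_list_of_set length_map length_upt minus_nat.diff_0)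
    have Xs_nsets: "\<And>y. y \<in> B \<Longrightarrow> Xs y \<in> nsets H k"
      using Xs_card hH gm by (auto simp: nsets_def Xs_def)
    have patXs: "\<And>y r. y \<in> B \<Longrightarrow> r < k \<Longrightarrow> c {Inl (Suc (h (g y r))), Inr (Suc ` Xs y)} = (r \<in> P)"
    proof -
      fix y r assume y: "y \<in> B" and r: "r < k"
      have "pat (Xs y) = P" unfolding P_def using patconst Xs_nsets[OF y] X0 by blast
      then show "c {Inl (Suc (h (g y r))), Inr (Suc ` Xs y)} = (r \<in> P)"
        using r Xs_sorted[OF y] by (auto simp: pat_def)
    qed
    have memXs: "\<And>y u. y \<in> B \<Longrightarrow> u \<in> A \<Longrightarrow> h (\<phi> u * M) \<in> Xs y \<longleftrightarrow> u \<in> Nb y"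
    proof -
      fix y u assume y: "y \<in> B" and u: "u \<in> A"
      have pu: "\<phi> u < k" using \<phi> QK u by auto
      have pum: "\<phi> u * M < m" using pu Mpos by (simp add: m_def)
      show "h (\<phi> u * M) \<in> Xs y \<longleftrightarrow> u \<in> Nb y"
      proof
        assume "u \<in> Nb y"
        then have "g y (\<phi> u) = \<phi> u * M" by (simp add: g_def off_def)
        then show "h (\<phi> u * M) \<in> Xs y" using pu unfolding Xs_def by (metis image_eqI lessThan_iff)
      next
        assume "h (\<phi> u * M) \<in> Xs y"
        then obtain r where r: "r < k" "h (\<phi> u * M) = h (g y r)" unfolding Xs_def by auto
        then have "\<phi> u * M + 0 = r * M + off y r" using hinj pum gm[OF y r(1)] by (simp add: g_def)
        then have "\<phi> u = r" "off y r = 0" using block_eq[of 0 M "off y r"] offM[OF y] Mpos by auto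
        then have "\<phi> u \<in> \<phi> ` Nb y" by (auto simp: off_def split: if_splits)
        then show "u \<in> Nb y" using \<phi>(2) u by (auto simp: Nb_def inj_on_def)
      qed
    qed
    define f where "f u = (if u \<in> A then Inl (Suc (h (\<phi> u * M))) else Inr (Suc ` Xs u))" for u
    have pum: "\<And>a. a \<in> A \<Longrightarrow> \<phi> a * M < m" and pk: "\<And>a. a \<in> A \<Longrightarrow> \<phi> a < k"
      using \<phi> QK Mpos by (auto simp: m_def)
    have fa_mem: "\<And>a. a \<in> A \<Longrightarrow> Suc (h (\<phi> a * M)) \<in> {1..N}"
      using hH pum finH by fastforce
    have Xs_sub: "\<And>y. y \<in> B \<Longrightarrow> Suc ` Xs y \<subseteq> {1..N}"
      using Xs_nsets finH by (fastforce simp: nsets_def)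
    have Xs_card': "\<And>y. y \<in> B \<Longrightarrow> card (Suc ` Xs y) = k"
      using Xs_card by (simp add: card_image)
    have fA: "\<And>a. a \<in> A \<Longrightarrow> f a = Inl (Suc (h (\<phi> a * M)))" by (simp add: f_def)
    have fB: "\<And>y. y \<in> B \<Longrightarrow> f y = Inr (Suc ` Xs y)" using AB(2) by (auto simp: f_def)
    have VAB: "\<And>u. u \<in> V \<Longrightarrow> u \<notin> A \<Longrightarrow> u \<in> B" using AB by auto
    show "\<exists>V'. V' \<subseteq> B_verts N k \<and>
        (\<exists>f. bij_betw f V V' \<and>
             (\<forall>u\<in>V. \<forall>v\<in>V. {u, v} \<in> E \<longleftrightarrow> {f u, f v} \<in> B_edges N k)) \<and>
        (\<exists>col. \<forall>e\<in>B_edges N k. e \<subseteq> V' \<longrightarrow> c e = col)"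
    proof (intro exI conjI)
      show "f ` V \<subseteq> B_verts N k"
      proof
        fix z assume "z \<in> f ` V"
        then obtain u where u: "u \<in> V" "z = f u" by auto
        show "z \<in> B_verts N k"
        proof (cases "u \<in> A")
          case True
          then show ?thesis using u fa_mem[OF True] fA[OF True] by (auto simp: B_verts_def)
        next
          case False
          then have y: "u \<in> B" using u VAB by auto
          then show ?thesis using u Xs_sub[OF y] Xs_card'[OF y] fB[OF y] by (auto simp: B_verts_def)
        qed
      qed
      obtain r0 where r0: "r0 < k" "r0 \<notin> \<phi> ` A"
      proof -
        have "card (\<phi> ` A) \<le> cV" using card_image_le[OF finA, of \<phi>] cA by linarith
        then have "\<not> {..<k} \<subseteq> \<phi> ` A" using card_mono[OF finite_imageI[OF finA]] by (force simp: k_def)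
        then show ?thesis using that by auto
      qed
      have "inj_on f V"
      proof (rule inj_onI)
        fix u v assume u: "u \<in> V" and v: "v \<in> V" and fuv: "f u = f v"
        show "u = v"
        proof (cases "u \<in> A")
          case uA: True
          show ?thesis
          proof (cases "v \<in> A")
            case True
            then have "h (\<phi> u * M) = h (\<phi> v * M)" using uA fuv by (simp add: f_def)
            then have "\<phi> u * M = \<phi> v * M" using hinj pum uA True by blast
            then have "\<phi> u = \<phi> v" using Mpos by simp
            then show ?thesis using \<phi>(2) uA True by (simp add: inj_on_def)
          next
            case False then show ?thesis using uA fuv by (simp add: f_def)
          qed
        next
          case uB: False
          show ?thesis
          proof (cases "v \<in> A")
            case True then show ?thesis using uB fuv by (simp add: f_def)
          next
            case False
            have yu: "u \<in> B" and yv: "v \<in> B" using u v uB False AB by auto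
            have "Suc ` Xs u = Suc ` Xs v" using uB False fuv by (simp add: f_def)
            then have X: "Xs u = Xs v" by (simp add: inj_image_eq_iff)
            have "h (g u r0) \<in> Xs v" using X r0 by (auto simp: Xs_def)
            then obtain r where r: "r < k" "h (g u r0) = h (g v r)" by (auto simp: Xs_def)
            then have "g u r0 = g v r" using hinj gm[OF yu r0(1)] gm[OF yv r(1)] by blast
            then have "r0 * M + off u r0 = r * M + off v r" by (simp add: g_def)
            then have "r0 = r" "off u r0 = off v r" using block_eq offM[OF yu] offM[OF yv] by blast+
            moreover have "r0 \<notin> \<phi> ` Nb u" "r0 \<notin> \<phi> ` Nb v" using r0 by (auto simp: Nb_def)
            ultimately have "\<psi> u = \<psi> v" by (simp add: off_def)
            then show ?thesis using \<psi>(2) yu yv by (simp add: inj_on_def)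
          qed
        qed
      qed
      then show "bij_betw f V (f ` V)" by (rule inj_on_imp_bij_betw)
      show "\<forall>u\<in>V. \<forall>v\<in>V. {u, v} \<in> E \<longleftrightarrow> {f u, f v} \<in> B_edges N k"
      proof (intro ballI)
        fix u v assume u: "u \<in> V" and v: "v \<in> V"
        have key: "{a, y} \<in> E \<longleftrightarrow> {f a, f y} \<in> B_edges N k" if a: "a \<in> A" and y: "y \<in> B" for a y
        proof -
          have "(Suc (h (\<phi> a * M)) \<in> Suc ` Xs y) = (a \<in> Nb y)" using memXs[OF y a] by auto
          then show ?thesis using a fA[OF a] fB[OF y] fa_mem[OF a] Xs_sub[OF y] Xs_card'[OF y]
            by (simp add: B_edge_iff Nb_def)
        qed
        have noAA: "{a, b} \<notin> E" if "a \<in> A" "b \<in> A" for a b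
          using eAB that AB(2) by (force simp: doubleton_eq_iff)
        have noBB: "{a, b} \<notin> E" if "a \<in> B" "b \<in> B" for a b
          using eAB that AB(2) by (force simp: doubleton_eq_iff)
        show "{u, v} \<in> E \<longleftrightarrow> {f u, f v} \<in> B_edges N k"
        proof (cases "u \<in> A")
          case uA: True
          show ?thesis
          proof (cases "v \<in> A")
            case True then show ?thesis using uA noAA fA no_LL by simp
          next
            case False then show ?thesis using uA key VAB v by simp
          qed
        next
          case uB: False
          show ?thesis
          proof (cases "v \<in> A")
            case True then show ?thesis using uB key[of v u] VAB u by (simp add: insert_commute)
          next
            case False then show ?thesis using uB noBB fB no_RR VAB u v by simp
          qed
        qed
      qed
      show "\<forall>e\<in>B_edges N k. e \<subseteq> f ` V \<longrightarrow> c e = col"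
      proof (intro ballI impI)
        fix e assume e: "e \<in> B_edges N k" and eV: "e \<subseteq> f ` V"
        obtain x X where ex: "e = {Inl x, Inr X}" "x \<in> X" using e by (rule B_edgeE) blast
        obtain u where u: "u \<in> V" "Inl x = f u" using eV ex by auto
        obtain y where y: "y \<in> V" "Inr X = f y" using eV ex by auto
        have uA: "u \<in> A" using u by (auto simp: f_def split: if_splits)
        have yA: "y \<notin> A" using y by (auto simp: f_def split: if_splits)
        have yB: "y \<in> B" using y yA AB by auto
        have x: "x = Suc (h (\<phi> u * M))" using u uA by (simp add: f_def)
        have X: "X = Suc ` Xs y" using y yA by (simp add: f_def)
        have "h (\<phi> u * M) \<in> Xs y" using ex(2) x X by auto
        then have "u \<in> Nb y" using memXs[OF yB uA] by simp
        then have gu: "g y (\<phi> u) = \<phi> u * M" by (simp add: g_def off_def)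
        have pu: "\<phi> u < k" "\<phi> u \<in> Q" using \<phi> QK uA by auto
        have "c e = (\<phi> u \<in> P)" using patXs[OF yB pu(1)] ex(1) x X gu by simp
        then show "c e = col" using Qcol pu(2) by simp
      qed
    qed
  qed
qed

end
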